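(* Let $k\ge 2$ be an integer and $\widehat B=\begin{pmatrix}\hat e&\hat f\\\hat g&\hat h\end{pmatrix}\in M_2(\mathbb Z_k)$, where $e,f,g,h\in\mathbb Z$. Then $|\mathrm{Cen}_{M_2(\mathbb Z_k)}(\widehat B)|=(kd)^2$, where $d=\gcd(e-h,f,g,k)$.
   Context: $\mathbb Z_k=\mathbb Z/k\mathbb Z$, $\hat x$ the residue of $x$; $\mathrm{Cen}_S(s)=\{t\in S:ts=st\}$. *)

theory Defs
  imports Main
begin

text \<open>The ring M_2(Z_k) is modelled concretely: Z_k is represented by the canonical
residues {0..<k} of int, and a 2x2 matrix [[a,b],[c,d]] by the tuple (a,b,c,d).\<close>

type_synonym mat2 = "int \<times> int \<times> int \<times> int"

definition M2_Zk :: "int \<Rightarrow> mat2 set" where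
  "M2_Zk k = {0..<k} \<times> {0..<k} \<times> {0..<k} \<times> {0..<k}"

definition mat2_mult :: "int \<Rightarrow> mat2 \<Rightarrow> mat2 \<Rightarrow> mat2" where
  "mat2_mult k X Y = (case X of (a, b, c, d) \<Rightarrow> case Y of (a', b', c', d') \<Rightarrow>
     ((a * a' + b * c') mod k, (a * b' + b * d') mod k,
      (c * a' + d * c') mod k, (c * b' + d * d') mod k))"

definition residue_mat :: "int \<Rightarrow> int \<Rightarrow> int \<Rightarrow> int \<Rightarrow> int \<Rightarrow> mat2" where
  "residue_mat k e f g h = (e mod k, f mod k, g mod k, h mod k)"

definition Cen_M2 :: "int \<Rightarrow> mat2 \<Rightarrow> mat2 set" where
  "Cen_M2 k B = {X \<in> M2_Zk k. mat2_mult k X B = mat2_mult k B X}"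

end

theory Submission
  imports Defs
begin

type_synonym v3 = "int \<times> int \<times> int"
type_synonym m3 = "v3 \<times> v3 \<times> v3"

definition cr :: "v3 \<Rightarrow> v3 \<Rightarrow> v3" where
  "cr x y = (case x of (x1,x2,x3) \<Rightarrow> case y of (y1,y2,y3) \<Rightarrow>
     (x2*y3 - x3*y2, x3*y1 - x1*y3, x1*y2 - x2*y1))"

definition dv :: "int \<Rightarrow> v3 \<Rightarrow> bool" where
  "dv k p = (case p of (p1,p2,p3) \<Rightarrow> k dvd p1 \<and> k dvd p2 \<and> k dvd p3)"

definition dot :: "v3 \<Rightarrow> v3 \<Rightarrow> int" where
  "dot r x = (case r of (r1,r2,r3) \<Rightarrow> case x of (x1,x2,x3) \<Rightarrow> r1*x1 + r2*x2 + r3*x3)"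

definition mv :: "m3 \<Rightarrow> v3 \<Rightarrow> v3" where
  "mv M x = (case M of (r1,r2,r3) \<Rightarrow> (dot r1 x, dot r2 x, dot r3 x))"

definition cof :: "m3 \<Rightarrow> m3" where
  "cof M = (case M of ((a,b,c),(d,e,f),(g,h,i)) \<Rightarrow>
     ((e*i - f*h, f*g - d*i, d*h - e*g),
      (c*h - b*i, a*i - c*g, b*g - a*h),
      (b*f - c*e, c*d - a*f, a*e - b*d)))"

definition modv :: "int \<Rightarrow> v3 \<Rightarrow> v3" where
  "modv k x = (case x of (x1,x2,x3) \<Rightarrow> (x1 mod k, x2 mod k, x3 mod k))"

definition R3 :: "int \<Rightarrow> v3 set" where
  "R3 k = {0..<k} \<times> {0..<k} \<times> {0..<k}"

definition S :: "int \<Rightarrow> v3 \<Rightarrow> v3 set" where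
  "S k w = {v \<in> R3 k. dv k (cr v w)}"

lemma cr_mv: "cr (mv M x) (mv M y) = mv (cof M) (cr x y)"
proof -
  obtain a b c d e f g h i where M: "M = ((a,b,c),(d,e,f),(g,h,i))" by (metis prod.exhaust)
  obtain x1 x2 x3 where x: "x = (x1,x2,x3)" by (metis prod.exhaust)
  obtain y1 y2 y3 where y: "y = (y1,y2,y3)" by (metis prod.exhaust)
  show ?thesis unfolding M x y cr_def mv_def cof_def dot_def
    by simp algebra
qed

lemma dv_mv: "dv k p \<Longrightarrow> dv k (mv M p)"
  by (cases M; cases p) (auto simp: dv_def mv_def dot_def)

lemma md2: "((r1::int) * (a mod k) + r2 * (b mod k) + r3 * (c mod k)) mod k = (r1*a + r2*b + r3*c) mod k"
proof -
  have "r1 * (a mod k) + r2 * (b mod k) + r3 * (c mod k) = (r1*a + r2*b + r3*c) + k * (- (r1*(a div k)) - r2*(b div k) - r3*(c div k))"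
    by (simp add: minus_mult_div_eq_mod[symmetric] algebra_simps)
  then show ?thesis by (simp add: mod_mult_self2)
qed
lemma md1: "((a::int) mod k * y - b mod k * z) mod k = (a*y - b*z) mod k"
proof -
  have "a mod k * y - b mod k * z = (a*y - b*z) + k * (b div k * z - a div k * y)"
    by (simp add: minus_mult_div_eq_mod[symmetric] algebra_simps)
  then show ?thesis by (simp add: mod_mult_self2)
qed

lemma dv_modv: "dv k (cr (modv k x) y) = dv k (cr x y)"
  by (cases x; cases y) (simp add: dv_def cr_def modv_def dvd_eq_mod_eq_0 md1)

lemma modv_mv_modv: "modv k (mv M (modv k x)) = modv k (mv M x)"
  by (cases M; cases x) (simp add: modv_def mv_def dot_def md2 split: prod.splits)

lemma modv_R3: "k > 0 \<Longrightarrow> modv k x \<in> R3 k"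
  by (cases x) (simp add: modv_def R3_def)

lemma modv_id: "x \<in> R3 k \<Longrightarrow> modv k x = x"
  by (cases x) (auto simp: modv_def R3_def)

lemma S_map: "k > 0 \<Longrightarrow> v \<in> S k w \<Longrightarrow> modv k (mv M v) \<in> S k (mv M w)"
proof -
  assume k: "k > 0" and v: "v \<in> S k w"
  have "dv k (cr v w)" using v by (simp add: S_def)
  then have "dv k (cr (mv M v) (mv M w))" by (simp only: cr_mv dv_mv)
  then have "dv k (cr (modv k (mv M v)) (mv M w))" by (simp only: dv_modv)
  then show ?thesis using modv_R3[OF k] by (simp add: S_def)
qed

lemma S_transfer:
  assumes k: "k > 0" and AB: "\<And>x. mv A (mv B x) = x" and BA: "\<And>x. mv B (mv A x) = x"
  shows "card (S k w) = card (S k (mv A w))"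
proof -
  have "bij_betw (\<lambda>v. modv k (mv A v)) (S k w) (S k (mv A w))"
  proof (rule bij_betw_byWitness[where f'="\<lambda>v. modv k (mv B v)"])
    show "\<forall>a\<in>S k w. modv k (mv B (modv k (mv A a))) = a"
      using modv_mv_modv BA modv_id unfolding S_def by auto
    show "\<forall>a\<in>S k (mv A w). modv k (mv A (modv k (mv B a))) = a"
      using modv_mv_modv AB modv_id unfolding S_def by auto
    show "(\<lambda>v. modv k (mv A v)) ` S k w \<subseteq> S k (mv A w)"
      by (rule image_subsetI, rule S_map[OF k])
    show "(\<lambda>v. modv k (mv B v)) ` S k (mv A w) \<subseteq> S k w"
    proof (rule image_subsetI)
      fix v assume "v \<in> S k (mv A w)"
      from S_map[OF k this, of B] show "modv k (mv B v) \<in> S k w" by (simp only: BA)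
    qed
  qed
  then show ?thesis by (rule bij_betw_same_card)
qed

lemma unimod2:
  fixes x y :: int
  obtains p q r s p' q' r' s' where
    "p*p'+q*r' = 1" "p*q'+q*s' = 0" "r*p'+s*r' = 0" "r*q'+s*s' = 1"
    "p'*p+q'*r = 1" "p'*q+q'*s = 0" "r'*p+s'*r = 0" "r'*q+s'*s = 1"
    "p*x+q*y = gcd x y" "r*x+s*y = 0"
proof (cases "gcd x y = 0")
  case True
  then have "x = 0" "y = 0" by auto
  show ?thesis by (rule that[where p=1 and q=0 and r=0 and s=1 and p'=1 and q'=0 and r'=0 and s'=1]) (use \<open>x = 0\<close> \<open>y = 0\<close> in simp_all)
next
  case False
  define g where "g = gcd x y"
  obtain p q where pq: "p*x+q*y = g" using bezout_int g_def by blast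
  obtain x' where x': "x = g*x'" unfolding g_def by (meson gcd_dvd1 dvd_def)
  obtain y' where y': "y = g*y'" unfolding g_def by (meson gcd_dvd2 dvd_def)
  have g0: "g \<noteq> 0" using False g_def by simp
  have "g * (p*x' + q*y') = g * 1" using pq x' y' by (simp add: algebra_simps)
  then have e: "p*x' + q*y' = 1" using g0 by simp
  show ?thesis
  proof (rule that[where p=p and q=q and r="-y'" and s=x' and p'=x' and q'="-q" and r'=y' and s'=p])
    show "p*x+q*y = gcd x y" using pq g_def by simp
    show "- y' * x + x' * y = 0" using x' y' by (simp add: algebra_simps)
  qed (use e in \<open>auto simp: algebra_simps\<close>)
qed

lemma card_dvd_mult:
  fixes n k :: int
  assumes k: "k > 0"
  shows "card {b \<in> {0..<k}. k dvd b*n} = nat (gcd n k)"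
proof -
  define d where "d = gcd n k"
  have d0: "d > 0" using k d_def by (simp add: gcd_pos_int)
  obtain k' where k': "k = d*k'" unfolding d_def by (meson gcd_dvd2 dvd_def)
  obtain n' where n': "n = d*n'" unfolding d_def by (meson gcd_dvd1 dvd_def)
  have k'0: "k' > 0" using k d0 k' by (simp add: zero_less_mult_iff)
  have cop: "coprime n' k'"
  proof -
    have "coprime (n div d) (k div d)" unfolding d_def using k by (intro div_gcd_coprime) simp
    moreover have "n div d = n'" "k div d = k'" using n' k' d0 by simp_all
    ultimately show ?thesis by simp
  qed
  have eq: "{b \<in> {0..<k}. k dvd b*n} = (\<lambda>i. k'*i) ` {0..<d}"
  proof (rule set_eqI, rule iffI)
    fix b assume "b \<in> {b \<in> {0..<k}. k dvd b*n}"
    then have b: "0 \<le> b" "b < k" "k dvd b*n" by auto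
    have "d*k' dvd d*(b*n')" using b(3) k' n' by (simp add: algebra_simps)
    then have "k' dvd b*n'" using d0 by simp
    then have "k' dvd b" using cop by (simp add: coprime_commute coprime_dvd_mult_left_iff)
    then obtain i where i: "b = k'*i" by (auto simp: dvd_def)
    have "0 \<le> i" using b(1) i k'0 by (simp add: zero_le_mult_iff)
    moreover have "i < d" using b(2) i k' k'0 by (simp add: mult.commute)
    ultimately have "i \<in> {0..<d}" by simp
    then show "b \<in> (\<lambda>i. k'*i) ` {0..<d}" unfolding i by (rule imageI)
  next
    fix b assume "b \<in> (\<lambda>i. k'*i) ` {0..<d}"
    then obtain i where i: "b = k'*i" "0 \<le> i" "i < d" by (metis atLeastLessThan_iff imageE)
    have "0 \<le> b" using i k'0 by simp
    moreover have "b < k" using i k' k'0 by (simp add: mult.commute)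
    moreover have "b*n = k*(i*n')" using i k' n' by (simp add: algebra_simps)
    ultimately show "b \<in> {b \<in> {0..<k}. k dvd b*n}" by simp
  qed
  have "inj_on (\<lambda>i. k'*i) {0..<d}" using k'0 by (auto simp: inj_on_def)
  then have "card {b \<in> {0..<k}. k dvd b*n} = card {0..<d}" unfolding eq by (rule card_image)
  then show ?thesis using d_def by simp
qed

lemma card_S_base:
  assumes k: "k > 0"
  shows "int (card (S k (n,0,0))) = k * (gcd n k)^2"
proof -
  define T where "T = {b \<in> {0..<k}. k dvd b*n}"
  have "S k (n,0,0) = {0..<k} \<times> T \<times> T"
    unfolding S_def T_def R3_def by (auto simp: dv_def cr_def mult.commute)
  then have "card (S k (n,0,0)) = nat k * (card T * card T)"
    by (simp add: card_cartesian_product)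
  moreover have "card T = nat (gcd n k)" unfolding T_def by (rule card_dvd_mult[OF k])
  ultimately show ?thesis using k by (simp add: power2_eq_square)
qed

lemma cen_char:
  "(mat2_mult k (a,b,c,d) (e,f,g,h) = mat2_mult k (e,f,g,h) (a,b,c,d)) = dv k (cr (a-d,b,c) (e-h,f,g))"
proof -
  have 1: "a*e+b*g - (e*a+f*c) = b*g - c*f" by (simp add: algebra_simps)
  have 2: "a*f+b*h - (e*b+f*d) = (a-d)*f - b*(e-h)" by (simp add: algebra_simps)
  have 3: "c*e+d*g - (g*a+h*c) = c*(e-h) - (a-d)*g" by (simp add: algebra_simps)
  have 4: "c*f+d*h - (g*b+h*d) = - (b*g - c*f)" by (simp add: algebra_simps)
  have 5: "k dvd (c*f - b*g) \<longleftrightarrow> k dvd (b*g - c*f)" by (metis dvd_minus_iff minus_diff_eq)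
  show ?thesis
    unfolding mat2_mult_def cr_def dv_def
    using 5 by (simp add: mod_eq_dvd_iff 1 2 3 4 del: dvd_minus_iff) (auto simp: dvd_minus_iff)
qed

lemma mdA: "((a::int) * (e mod k) + b * (g mod k)) mod k = (a*e + b*g) mod k"
proof -
  have "a * (e mod k) + b * (g mod k) = (a*e + b*g) + k * (- (a*(e div k)) - b*(g div k))"
    by (simp add: minus_mult_div_eq_mod[symmetric] algebra_simps)
  then show ?thesis by (simp add: mod_mult_self2)
qed

lemma mdB: "((e::int) mod k * a + g mod k * b) mod k = (e*a + g*b) mod k"
  using mdA[of a e k b g] by (simp add: mult.commute)

lemma res_mult1: "mat2_mult k (a,b,c,d) (residue_mat k e f g h) = mat2_mult k (a,b,c,d) (e,f,g,h)"
  unfolding mat2_mult_def residue_mat_def by (simp only: prod.case mdA)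

lemma res_mult2: "mat2_mult k (residue_mat k e f g h) (a,b,c,d) = mat2_mult k (e,f,g,h) (a,b,c,d)"
  unfolding mat2_mult_def residue_mat_def by (simp only: prod.case mdB)

lemma cen_card:
  assumes k: "k > 0"
  shows "card (Cen_M2 k (residue_mat k e f g h)) = card ({0..<k} \<times> S k (e-h,f,g))"
proof -
  let ?w = "(e-h,f,g)"
  have mem: "(a,b,c,d) \<in> Cen_M2 k (residue_mat k e f g h) \<longleftrightarrow>
     a \<in> {0..<k} \<and> b \<in> {0..<k} \<and> c \<in> {0..<k} \<and> d \<in> {0..<k} \<and> dv k (cr (a-d,b,c) ?w)" for a b c d
    unfolding Cen_M2_def M2_Zk_def by (simp add: res_mult1 res_mult2 cen_char)
  have memS: "(u,b,c) \<in> S k ?w \<longleftrightarrow> u \<in> {0..<k} \<and> b \<in> {0..<k} \<and> c \<in> {0..<k} \<and> dv k (cr (u,b,c) ?w)" for u b c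
    unfolding S_def R3_def by simp
  have md: "dv k (cr (x mod k, b mod k, c mod k) ?w) = dv k (cr (x,b,c) ?w)" for x b c
    using dv_modv[of k "(x,b,c)" ?w] by (simp add: modv_def)
  define \<phi> where "\<phi> = (\<lambda>(a::int,b::int,c::int,d::int). (d, ((a-d) mod k, b, c)))"
  define \<psi> where "\<psi> = (\<lambda>(d::int,u::int,b::int,c::int). ((u+d) mod k, b, c, d))"
  have "bij_betw \<phi> (Cen_M2 k (residue_mat k e f g h)) ({0..<k} \<times> S k ?w)"
  proof (rule bij_betw_byWitness[where f'=\<psi>])
    show "\<forall>X\<in>Cen_M2 k (residue_mat k e f g h). \<psi> (\<phi> X) = X"
    proof
      fix X assume "X \<in> Cen_M2 k (residue_mat k e f g h)"
      then obtain a b c d where X: "X = (a,b,c,d)" and r: "a \<in> {0..<k}" "d \<in> {0..<k}"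
        using mem by (cases X) blast
      have "((a - d) mod k + d) mod k = a" using r by (simp add: mod_add_left_eq)
      then show "\<psi> (\<phi> X) = X" unfolding X \<phi>_def \<psi>_def by simp
    qed
    show "\<forall>Y\<in>{0..<k} \<times> S k ?w. \<phi> (\<psi> Y) = Y"
    proof
      fix Y assume "Y \<in> {0..<k} \<times> S k ?w"
      then obtain d u b c where Y: "Y = (d,u,b,c)" and r: "u \<in> {0..<k}" "d \<in> {0..<k}"
        using memS by (cases Y) blast
      have "((u + d) mod k - d) mod k = u" using r by (simp add: mod_diff_left_eq)
      then show "\<phi> (\<psi> Y) = Y" unfolding Y \<phi>_def \<psi>_def by simp
    qed
    show "\<phi> ` Cen_M2 k (residue_mat k e f g h) \<subseteq> {0..<k} \<times> S k ?w"
    proof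
      fix Y assume "Y \<in> \<phi> ` Cen_M2 k (residue_mat k e f g h)"
      then obtain a b c d where Y: "Y = \<phi> (a,b,c,d)" and X: "(a,b,c,d) \<in> Cen_M2 k (residue_mat k e f g h)"
        by auto
      have r: "a \<in> {0..<k}" "b \<in> {0..<k}" "c \<in> {0..<k}" "d \<in> {0..<k}" "dv k (cr (a-d,b,c) ?w)"
        using X mem by blast+
      have "dv k (cr ((a-d) mod k, b mod k, c mod k) ?w)" using r(5) md by blast
      moreover have "b mod k = b" "c mod k = c" using r by auto
      ultimately have "dv k (cr ((a-d) mod k, b, c) ?w)" by simp
      then show "Y \<in> {0..<k} \<times> S k ?w" unfolding Y \<phi>_def using r k memS by simp
    qed
    show "\<psi> ` ({0..<k} \<times> S k ?w) \<subseteq> Cen_M2 k (residue_mat k e f g h)"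
    proof
      fix X assume "X \<in> \<psi> ` ({0..<k} \<times> S k ?w)"
      then obtain d u b c where X: "X = \<psi> (d,u,b,c)" and Y: "(d,u,b,c) \<in> {0..<k} \<times> S k ?w"
        by auto
      have r: "d \<in> {0..<k}" "u \<in> {0..<k}" "b \<in> {0..<k}" "c \<in> {0..<k}" "dv k (cr (u,b,c) ?w)"
        using Y memS by blast+
      have "((u+d) mod k - d) mod k = u" using r by (simp add: mod_diff_left_eq)
      then have "dv k (cr (((u+d) mod k - d) mod k, b mod k, c mod k) ?w)" using r by simp
      then have "dv k (cr ((u+d) mod k - d, b, c) ?w)" using md by blast
      then show "X \<in> Cen_M2 k (residue_mat k e f g h)" unfolding X \<psi>_def using r k mem by simp
    qed
  qed
  then show ?thesis by (rule bij_betw_same_card)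
qed

lemma lin2: "(a::int)*(p'*x+q'*y)+b*(r'*x+s'*y) = (a*p'+b*r')*x + (a*q'+b*s')*y"
  by (simp add: algebra_simps)

theorem corollary3p9:
  fixes k e f g h :: int
  assumes "k \<ge> 2"
  shows "int (card (Cen_M2 k (residue_mat k e f g h)))
           = (k * gcd (gcd (gcd (e - h) f) g) k) ^ 2"
proof -
  have k: "k > 0" using assms by simp
  define t where "t = e - h"
  obtain p q r s p' q' r' s' where u1:
    "p*p'+q*r' = 1" "p*q'+q*s' = 0" "r*p'+s*r' = 0" "r*q'+s*s' = 1"
    "p'*p+q'*r = 1" "p'*q+q'*s = 0" "r'*p+s'*r = 0" "r'*q+s'*s = 1"
    "p*f+q*g = gcd f g" "r*f+s*g = 0"
    by (rule unimod2)
  obtain P Q R S' P' Q' R' S'' where u2: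
    "P*P'+Q*R' = 1" "P*Q'+Q*S'' = 0" "R*P'+S'*R' = 0" "R*Q'+S'*S'' = 1"
    "P'*P+Q'*R = 1" "P'*Q+Q'*S' = 0" "R'*P+S''*R = 0" "R'*Q+S''*S' = 1"
    "P*t+Q*gcd f g = gcd t (gcd f g)" "R*t+S'*gcd f g = 0"
    by (rule unimod2)
  define A1 :: m3 where "A1 = ((1,0,0),(0,p,q),(0,r,s))"
  define B1 :: m3 where "B1 = ((1,0,0),(0,p',q'),(0,r',s'))"
  define A2 :: m3 where "A2 = ((P,Q,0),(R,S',0),(0,0,1))"
  define B2 :: m3 where "B2 = ((P',Q',0),(R',S'',0),(0,0,1))"
  have AB1: "mv A1 (mv B1 x) = x" for x
    by (cases x) (simp add: A1_def B1_def mv_def dot_def lin2 u1)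
  have BA1: "mv B1 (mv A1 x) = x" for x
    by (cases x) (simp add: A1_def B1_def mv_def dot_def lin2 u1)
  have AB2: "mv A2 (mv B2 x) = x" for x
    by (cases x) (simp add: A2_def B2_def mv_def dot_def lin2 u2)
  have BA2: "mv B2 (mv A2 x) = x" for x
    by (cases x) (simp add: A2_def B2_def mv_def dot_def lin2 u2)
  have w1: "mv A1 (t,f,g) = (t, gcd f g, 0)" by (simp add: A1_def mv_def dot_def u1)
  have w2: "mv A2 (t, gcd f g, 0) = (gcd t (gcd f g), 0, 0)" by (simp add: A2_def mv_def dot_def u2)
  have "card (S k (t,f,g)) = card (S k (gcd t (gcd f g), 0, 0))"
    using S_transfer[OF k AB1 BA1, of "(t,f,g)"] S_transfer[OF k AB2 BA2, of "(t, gcd f g, 0)"]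
    by (simp add: w1 w2)
  then have cS: "int (card (S k (t,f,g))) = k * (gcd (gcd t (gcd f g)) k)^2"
    using card_S_base[OF k] by simp
  have "card (Cen_M2 k (residue_mat k e f g h)) = nat k * card (S k (t,f,g))"
    using cen_card[OF k] by (simp add: card_cartesian_product t_def)
  then have "int (card (Cen_M2 k (residue_mat k e f g h))) = k * (k * (gcd (gcd t (gcd f g)) k)^2)"
    using cS k by simp
  also have "\<dots> = (k * gcd (gcd (gcd (e - h) f) g) k) ^ 2"
    by (simp add: t_def gcd.assoc power2_eq_square algebra_simps)
  finally show ?thesis .
qed

end
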